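(* Fix $n\ge1$ and $j$ with $|j|\le k-1$ and $I_j\neq\emptyset$. Let $E_{n,j}(\kappa)$ be the bottom of the spectrum of the operator $H_{j,\kappa}=\pi_{I_j}(\Delta+v_\kappa)\iota_{I_j}$ on $\ell^2(I_j)$. Then $$\liminf_{\kappa\to0^+}\frac{E_{n,j}(\kappa)}{\kappa^2}\ge2n+1 .$$
   Context: $(\Delta f)(x)=2f(x)-f(x+1)-f(x-1)$ on $\ell^2(\mathbb{Z})$ and $v_\kappa(x)=\kappa^4x^2$. For $I\subseteq\mathbb{Z}$, $\pi_I:\ell^2(\mathbb{Z})\to\ell^2(I)$ is restriction and $\iota_I:\ell^2(I)\to\ell^2(\mathbb{Z})$ is extension by zero (Dirichlet restriction). Fix $n\ge1$. Let $h_n$ be the physicists' Hermite polynomial $h_n(y)=(-1)^ne^{y^2}\frac{d^n}{dy^n}e^{-y^2}$. Let $0\le z_1<z_2<\dots<z_k$ be the nonnegative zeros of $h_n$, where $k=n/2$ if $n$ is even (then $z_1>0$) and $k=(n+1)/2$ if $n$ is odd (then $z_1=0$). For $\kappa>0$ define: $a_1=\lfloor z_1/\kappa\rfloor+1$; $\beta_1=1$ if $z_1=0$ and $\beta_1=z_1/(\kappa(a_1-1))$ otherwise; for $2\le j\le k$, $a_j=\lfloor z_j/(\beta_{j-1}\kappa)\rfloor+1$ and $\beta_j=z_j/(\kappa(a_j-1))$; for $1\le j\le k-1$, $b_j=\lfloor z_{j+1}/(\beta_j\kappa)\rfloor-1$, and $b_k=\infty$. Set $I_j=[a_j,b_j]\cap\mathbb{Z}$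 for $1\le j\le k$ (so $I_k=[a_k,\infty)\cap\mathbb{Z}$), $I_{-j}=[-b_j,-a_j]\cap\mathbb{Z}$ and $\beta_{-j}=\beta_j$. If $n$ is even, put $b_0=a_1-2$, $I_0=[-b_0,b_0]\cap\mathbb{Z}$ and $\beta_0=1$; if $n$ is odd, $I_0=\emptyset$. *)

theory Defs
  imports "HOL-Analysis.Analysis"
begin

definition hermite :: "nat \<Rightarrow> real \<Rightarrow> real" where
  "hermite n y = (-1)^n * exp (y^2) * (deriv ^^ n) (\<lambda>t. exp (-(t^2))) y"

text \<open>Nonnegative zeros of h_n, in increasing order: z n i is z_i (1-based).\<close>
definition hzero :: "nat \<Rightarrow> nat \<Rightarrow> real" where
  "hzero n i = sorted_list_of_set {y::real. 0 \<le> y \<and> hermite n y = 0} ! (i - 1)"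

definition hk :: "nat \<Rightarrow> nat" where
  "hk n = (if even n then n div 2 else (n + 1) div 2)"

fun abeta :: "nat \<Rightarrow> real \<Rightarrow> nat \<Rightarrow> int \<times> real" where
  "abeta n \<kappa> 0 = undefined"
| "abeta n \<kappa> (Suc 0) =
     (let a = \<lfloor>hzero n 1 / \<kappa>\<rfloor> + 1
      in (a, if hzero n 1 = 0 then 1 else hzero n 1 / (\<kappa> * real_of_int (a - 1))))"
| "abeta n \<kappa> (Suc (Suc j)) =
     (let \<beta>' = snd (abeta n \<kappa> (Suc j));
          a = \<lfloor>hzero n (Suc (Suc j)) / (\<beta>' * \<kappa>)\<rfloor> + 1
      in (a, hzero n (Suc (Suc j)) / (\<kappa> * real_of_int (a - 1))))"

definition aa :: "nat \<Rightarrow> real \<Rightarrow> nat \<Rightarrow> int" where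
  "aa n \<kappa> j = fst (abeta n \<kappa> j)"

definition beta :: "nat \<Rightarrow> real \<Rightarrow> nat \<Rightarrow> real" where
  "beta n \<kappa> j = snd (abeta n \<kappa> j)"

definition bb :: "nat \<Rightarrow> real \<Rightarrow> nat \<Rightarrow> int" where
  "bb n \<kappa> j = \<lfloor>hzero n (Suc j) / (beta n \<kappa> j * \<kappa>)\<rfloor> - 1"

text \<open>The intervals I_j for |j| \<le> k-1 (only meaningful in that range).\<close>
definition Iset :: "nat \<Rightarrow> real \<Rightarrow> int \<Rightarrow> int set" where
  "Iset n \<kappa> j =
     (if j = 0 then (if even n then {-(aa n \<kappa> 1 - 2) .. aa n \<kappa> 1 - 2} else {})
      else if 0 < j then {aa n \<kappa> (nat j) .. bb n \<kappa> (nat j)}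
      else {- bb n \<kappa> (nat (-j)) .. - aa n \<kappa> (nat (-j))})"

definition Hop :: "real \<Rightarrow> (int \<Rightarrow> complex) \<Rightarrow> int \<Rightarrow> complex" where
  "Hop \<kappa> f x = 2 * f x - f (x + 1) - f (x - 1) + of_real (\<kappa>^4 * (real_of_int x)^2) * f x"

text \<open>Spectrum of the Dirichlet restriction pi_I (Delta+v) iota_I on the finite-dimensional
  space l^2(I): its eigenvalues.\<close>
definition dir_spectrum :: "real \<Rightarrow> int set \<Rightarrow> complex set" where
  "dir_spectrum \<kappa> I = {\<mu>. \<exists>f::int \<Rightarrow> complex. (\<forall>x. x \<notin> I \<longrightarrow> f x = 0) \<and> (\<exists>x\<in>I. f x \<noteq> 0)
       \<and> (\<forall>x\<in>I. Hop \<kappa> f x = \<mu> * f x)}"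

text \<open>Bottom of the spectrum E_{n,j}(kappa) (spectrum is real, operator self-adjoint).\<close>
definition Enj :: "nat \<Rightarrow> int \<Rightarrow> real \<Rightarrow> real" where
  "Enj n j \<kappa> = Inf (Re ` dir_spectrum \<kappa> (Iset n \<kappa> j))"

end

theory Submission
  imports Defs "HOL-Real_Asymp.Real_Asymp" "HOL-Computational_Algebra.Fundamental_Theorem_Algebra"
begin

definition G :: "nat \<Rightarrow> real \<Rightarrow> real" where
  "G n = (deriv ^^ n) (\<lambda>t. exp (-(t^2)))"

primrec HP :: "nat \<Rightarrow> real poly" where
  "HP 0 = 1"
| "HP (Suc n) = pderiv (HP n) - [:0,2:] * HP n"

lemma pe_deriv: "((\<lambda>y. poly p y * exp (-(y^2))) has_real_derivative
      (poly (pderiv p) y - 2*y*poly p y) * exp(-(y^2))) (at y)"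
proof -
  have a: "(poly p has_real_derivative poly (pderiv p) y) (at y)" by (rule poly_DERIV)
  have b: "((\<lambda>y. exp (-(y^2))) has_real_derivative exp(-(y^2)) * (-(2*y))) (at y)"
    by (auto intro!: derivative_eq_intros)
  from DERIV_mult[OF a b] show ?thesis by (simp add: algebra_simps)
qed

lemma G_poly: "G n = (\<lambda>y. poly (HP n) y * exp (-(y^2)))"
proof (induction n)
  case 0 show ?case by (simp add: G_def)
next
  case (Suc n)
  have d: "((\<lambda>y. poly (HP n) y * exp (-(y^2))) has_real_derivative poly (HP (Suc n)) y * exp(-(y^2))) (at y)" for y
    using pe_deriv[of "HP n" y] by (simp add: algebra_simps)
  have "G (Suc n) = deriv (G n)" by (simp add: G_def)
  also have "\<dots> = (\<lambda>y. poly (HP (Suc n)) y * exp (-(y^2)))"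
    unfolding Suc by (rule ext) (rule DERIV_imp_deriv[OF d])
  finally show ?case .
qed

lemma G_deriv: "(G n has_real_derivative G (Suc n) y) (at y)"
proof -
  have "G (Suc n) = deriv (G n)" by (simp add: G_def)
  moreover have "G n differentiable (at y)"
    unfolding G_poly using pe_deriv real_differentiable_def by blast
  ultimately show ?thesis by (simp add: DERIV_deriv_iff_real_differentiable)
qed

lemma G_deriv_chain [derivative_intros]:
  "(f has_real_derivative f') (at x within s) \<Longrightarrow>
   ((\<lambda>x. G n (f x)) has_real_derivative G (Suc n) (f x) * f') (at x within s)"
  by (metis DERIV_chain' G_deriv)

lemma G_cont: "continuous_on S (G n)"
  unfolding G_poly by (auto intro!: continuous_intros)

lemma G_isCont: "isCont (G n) y"
  using G_deriv DERIV_isCont by blast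

lemma G0: "G 0 y = exp (-(y^2))" by (simp add: G_poly)
lemma G1: "G 1 y = -2*y*exp (-(y^2))" by (simp add: G_poly)
lemma G2: "G 2 y = (4*y^2-2)*exp (-(y^2))" by (simp add: G_poly numeral_2_eq_2 algebra_simps power2_eq_square pderiv_pCons)

lemma G_rec: "G (Suc (Suc n)) y = -2*y*G (Suc n) y - 2*(real n+1)*G n y"
proof (induction n arbitrary: y)
  case 0 show ?case by (simp add: G0 G1[unfolded One_nat_def] G2[unfolded numeral_2_eq_2] algebra_simps power2_eq_square)
next
  case (Suc n)
  have eq: "G (Suc (Suc n)) = (\<lambda>y. -2*y*G (Suc n) y - 2*(real n+1)*G n y)"
    using Suc by (rule ext)
  have "((\<lambda>y. -2*y*G (Suc n) y - 2*(real n+1)*G n y) has_real_derivative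
      -2*G (Suc n) y - 2*y*G (Suc (Suc n)) y - 2*(real n+1)*G (Suc n) y) (at y)"
    by (auto intro!: derivative_eq_intros G_deriv simp: algebra_simps)
  moreover have "(G (Suc (Suc n)) has_real_derivative G (Suc (Suc (Suc n))) y) (at y)"
    by (rule G_deriv)
  ultimately have "G (Suc (Suc (Suc n))) y = -2*G (Suc n) y - 2*y*G (Suc (Suc n)) y - 2*(real n+1)*G (Suc n) y"
    unfolding eq using DERIV_unique by blast
  then show ?case by (simp add: algebra_simps)
qed

lemma G_simple: "\<not> (G n a = 0 \<and> G (Suc n) a = 0)"
proof (induction n)
  case 0 show ?case by (simp add: G0)
next
  case (Suc n)
  show ?case
  proof
    assume h: "G (Suc n) a = 0 \<and> G (Suc (Suc n)) a = 0"
    have e: "0 = - 2 * (real n + 1) * G n a" using G_rec[of n a] h by simp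
    then have "G n a = 0" by (smt (verit) e mult_eq_0_iff of_nat_0_le_iff)
    with h Suc show False by blast
  qed
qed

lemma G_parity: "G n (-y) = (-1)^n * G n y \<and> G (Suc n) (-y) = (-1)^(Suc n) * G (Suc n) y"
proof (induction n)
  case 0 show ?case by (simp add: G0 G1[unfolded One_nat_def])
next
  case (Suc n)
  then show ?case by (simp add: G_rec algebra_simps)
qed

lemma G_odd0: "odd n \<Longrightarrow> G n 0 = 0"
  using G_parity[of n 0] by simp

lemma HP_nz: "HP n \<noteq> 0"
proof
  assume "HP n = 0"
  then have z: "G n = (\<lambda>_. 0)" by (simp add: G_poly)
  have "G (Suc n) 0 = 0"
    using G_deriv[of n 0] unfolding z by (metis DERIV_const DERIV_unique)
  moreover have "G n 0 = 0" using z by simp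
  ultimately show False using G_simple by blast
qed

lemma G_zero_iff: "G n y = 0 \<longleftrightarrow> poly (HP n) y = 0"
  by (simp add: G_poly)

lemma G_zeros_finite: "finite {y. G n y = 0}"
  unfolding G_zero_iff using poly_roots_finite[OF HP_nz] .

lemma hermite_G: "hermite n y = (-1)^n * exp (y^2) * G n y"
  by (simp add: hermite_def G_def)

lemma hermite_zero_iff: "hermite n y = 0 \<longleftrightarrow> G n y = 0"
  by (simp add: hermite_G)

lemma pow_exp_decay: "((\<lambda>y::real. y^i * exp(-(y^2))) \<longlongrightarrow> 0) at_top"
proof -
  have a: "((\<lambda>y::real. y^i / exp y) \<longlongrightarrow> 0) at_top" by (rule tendsto_power_div_exp_0)
  have b: "((\<lambda>y::real. exp (y - y^2)) \<longlongrightarrow> 0) at_top" by real_asymp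
  have "((\<lambda>y::real. (y^i / exp y) * exp (y - y^2)) \<longlongrightarrow> 0 * 0) at_top"
    by (rule tendsto_mult[OF a b])
  moreover have "(y^i / exp y) * exp (y - y^2) = y^i * exp(-(y^2))" for y :: real
    by (simp add: exp_diff exp_minus field_simps)
  ultimately show ?thesis by simp
qed

lemma G_decay: "(G n \<longlongrightarrow> 0) at_top"
proof -
  have "((\<lambda>y. \<Sum>i\<le>degree (HP n). coeff (HP n) i * (y^i * exp(-(y^2)))) \<longlongrightarrow> 0) at_top"
    by (intro tendsto_null_sum tendsto_mult_right_zero pow_exp_decay)
  moreover have "G n = (\<lambda>y. \<Sum>i\<le>degree (HP n). coeff (HP n) i * (y^i * exp(-(y^2))))"
    by (rule ext) (simp add: G_poly poly_altdef sum_distrib_right mult.assoc)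
  ultimately show ?thesis by simp
qed

lemma G_rolle:
  assumes "a < b" "G n a = G n b"
  shows "\<exists>z. a < z \<and> z < b \<and> G (Suc n) z = 0"
proof -
  have "\<exists>z. a < z \<and> z < b \<and> DERIV (G n) z :> 0"
    by (rule Rolle[OF assms G_cont]) (use G_deriv real_differentiable_def in blast)
  then show ?thesis using G_deriv DERIV_unique by blast
qed

lemma G_tail:
  assumes "G n q = 0"
  shows "\<exists>z>q. G (Suc n) z = 0"
proof (cases "\<exists>t>q. G n t \<noteq> 0")
  case False
  then have "G n (q+1) = G n (q+2)" by auto
  from G_rolle[OF _ this] show ?thesis by (metis add_less_cancel_left less_add_one one_less_numeral_iff semiring_norm(76) less_trans)
next
  case True
  then obtain t where t: "t > q" "G n t \<noteq> 0" by blast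
  define c where "c = G n t"
  have "\<forall>\<^sub>F y in at_top. \<bar>G n y\<bar> < \<bar>c\<bar>/2"
    using G_decay[of n, THEN tendstoD, of "\<bar>c\<bar>/2"] t(2) unfolding c_def by (simp add: dist_real_def)
  then obtain T0 where T0: "\<And>y. y \<ge> T0 \<Longrightarrow> \<bar>G n y\<bar> < \<bar>c\<bar>/2" by (auto simp: eventually_at_top_linorder)
  define T where "T = max T0 (t+1)"
  have T: "T > t" "\<bar>G n T\<bar> < \<bar>c\<bar>/2" using T0[of T] by (auto simp: T_def)
  have "\<exists>s1. q \<le> s1 \<and> s1 \<le> t \<and> G n s1 = c/2"
  proof (cases "c > 0")
    case True
    show ?thesis by (rule IVT'[OF _ _ _ G_cont]) (use assms t True in \<open>auto simp: c_def\<close>)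
  next
    case False
    then have "c < 0" using t(2) c_def by auto
    show ?thesis by (rule IVT2'[OF _ _ _ G_cont]) (use assms t \<open>c<0\<close> in \<open>auto simp: c_def\<close>)
  qed
  then obtain s1 where s1: "q \<le> s1" "s1 \<le> t" "G n s1 = c/2" by blast
  have "\<exists>s2. t \<le> s2 \<and> s2 \<le> T \<and> G n s2 = c/2"
  proof (cases "c > 0")
    case True
    show ?thesis by (rule IVT2'[OF _ _ _ G_cont]) (use T True in \<open>auto simp: c_def\<close>)
  next
    case False
    then have "c < 0" using t(2) c_def by auto
    show ?thesis by (rule IVT'[OF _ _ _ G_cont]) (use T \<open>c<0\<close> in \<open>auto simp: c_def\<close>)
  qed
  then obtain s2 where s2: "t \<le> s2" "s2 \<le> T" "G n s2 = c/2" by blast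
  have "s1 \<noteq> t" "s2 \<noteq> t" using s1 s2 t(2) c_def by auto
  then have "s1 < s2" using s1 s2 by auto
  have "G n s1 = G n s2" using s1 s2 by simp
  from G_rolle[OF \<open>s1 < s2\<close> this] obtain z where "s1 < z" "G (Suc n) z = 0" by auto
  then show ?thesis using s1 by (intro exI[of _ z]) auto
qed

definition Zn :: "nat \<Rightarrow> real set" where "Zn n = {y. 0 \<le> y \<and> G n y = 0}"

lemma Zn_finite: "finite (Zn n)"
  using G_zeros_finite[of n] unfolding Zn_def by (rule rev_finite_subset) auto

lemma Zn_card: "(n+1) div 2 \<le> card (Zn n)"
proof (induction n)
  case 0 show ?case by simp
next
  case (Suc n)
  let ?S = "Zn n"
  have ex: "\<exists>z. q < z \<and> G (Suc n) z = 0 \<and> (\<forall>r\<in>?S. q < r \<longrightarrow> z < r)" if q: "q \<in> ?S" for q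
  proof (cases "{r\<in>?S. q < r} = {}")
    case True
    from G_tail[of n q] q obtain z where "z > q" "G (Suc n) z = 0" by (auto simp: Zn_def)
    then show ?thesis using True by auto
  next
    case False
    define r0 where "r0 = Min {r\<in>?S. q < r}"
    have fin: "finite {r\<in>?S. q < r}" using Zn_finite by auto
    have r0: "r0 \<in> {r\<in>?S. q < r}" using Min_in[OF fin False] r0_def by simp
    have r0le: "\<forall>r\<in>?S. q < r \<longrightarrow> r0 \<le> r" using Min_le[OF fin] r0_def by auto
    have "G n q = G n r0" using q r0 by (simp add: Zn_def)
    from G_rolle[OF _ this] r0 obtain z where "q < z" "z < r0" "G (Suc n) z = 0" by auto
    then show ?thesis using r0le by force
  qed
  define \<zeta> where "\<zeta> q = (SOME z. q < z \<and> G (Suc n) z = 0 \<and> (\<forall>r\<in>?S. q < r \<longrightarrow> z < r))" for q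
  have \<zeta>: "q < \<zeta> q \<and> G (Suc n) (\<zeta> q) = 0 \<and> (\<forall>r\<in>?S. q < r \<longrightarrow> \<zeta> q < r)" if "q \<in> ?S" for q
    unfolding \<zeta>_def by (rule someI_ex[OF ex[OF that]])
  have mono: "\<zeta> q1 < \<zeta> q2" if "q1 \<in> ?S" "q2 \<in> ?S" "q1 < q2" for q1 q2
    using \<zeta>[OF that(1)] \<zeta>[OF that(2)] that(3) that(2) by force
  have inj: "inj_on \<zeta> ?S"
    by (rule inj_onI) (metis linorder_neq_iff mono order_less_irrefl)
  have sub: "\<zeta> ` ?S \<subseteq> {y. 0 < y \<and> G (Suc n) y = 0}"
    using \<zeta> by (force simp: Zn_def)
  have finS: "finite {y. 0 \<le> y \<and> G (Suc n) y = 0}" using Zn_finite[of "Suc n"] by (simp add: Zn_def)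
  have c1: "card ?S = card (\<zeta> ` ?S)" using card_image[OF inj] by simp
  show ?case
  proof (cases "even n")
    case True
    then have "G (Suc n) 0 = 0" using G_odd0 by simp
    then have "insert 0 (\<zeta> ` ?S) \<subseteq> Zn (Suc n)" using sub by (auto simp: Zn_def)
    moreover have "0 \<notin> \<zeta> ` ?S" using sub by auto
    ultimately have "card (\<zeta> ` ?S) + 1 \<le> card (Zn (Suc n))"
      using card_mono[OF Zn_finite] Zn_finite
      by (metis Suc_eq_plus1 card_insert_disjoint finite_imageI Zn_finite)
    then show ?thesis using Suc.IH c1 True by presburger
  next
    case False
    have "\<zeta> ` ?S \<subseteq> Zn (Suc n)" using sub by (auto simp: Zn_def)
    then have "card (\<zeta> ` ?S) \<le> card (Zn (Suc n))" using card_mono[OF Zn_finite] by blast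
    then show ?thesis using Suc.IH c1 False by presburger
  qed
qed

lemma hk_eq: "hk n = (n+1) div 2" by (simp add: hk_def)

lemma Zh_eq: "{y::real. 0 \<le> y \<and> hermite n y = 0} = Zn n"
  by (auto simp: Zn_def hermite_zero_iff)

lemma hzero_eq: "hzero n i = sorted_list_of_set (Zn n) ! (i - 1)"
  by (simp add: hzero_def Zh_eq)

lemma len_L: "hk n \<le> length (sorted_list_of_set (Zn n))"
  using Zn_card[of n] by (simp add: hk_eq Zn_finite)

lemma Z1: assumes "1 \<le> i" "i \<le> hk n" shows "hzero n i \<in> Zn n"
proof -
  have "i - 1 < length (sorted_list_of_set (Zn n))" using len_L[of n] assms by linarith
  then have "sorted_list_of_set (Zn n) ! (i-1) \<in> set (sorted_list_of_set (Zn n))" by (rule nth_mem)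
  then show ?thesis unfolding hzero_eq using Zn_finite by simp
qed

lemma Z1': "1 \<le> i \<Longrightarrow> i \<le> hk n \<Longrightarrow> 0 \<le> hzero n i \<and> G n (hzero n i) = 0"
  using Z1 by (simp add: Zn_def)

lemma L_less: "p < q \<Longrightarrow> q < length (sorted_list_of_set (Zn n)) \<Longrightarrow>
   sorted_list_of_set (Zn n) ! p < sorted_list_of_set (Zn n) ! q"
  using sorted_wrt_nth_less[OF strict_sorted_list_of_set] by blast

lemma L_mono_iff: "p < length (sorted_list_of_set (Zn n)) \<Longrightarrow> q < length (sorted_list_of_set (Zn n)) \<Longrightarrow>
   sorted_list_of_set (Zn n) ! p < sorted_list_of_set (Zn n) ! q \<longleftrightarrow> p < q"
  by (metis L_less linorder_neq_iff order_less_asym order_less_irrefl)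

lemma Z2: "1 \<le> i \<Longrightarrow> i < hk n \<Longrightarrow> hzero n i < hzero n (Suc i)"
  unfolding hzero_eq using len_L[of n] L_less[of "i-1" i n] by simp

lemma Z3: assumes "1 \<le> i" "i < hk n" "hzero n i < y" "y < hzero n (Suc i)"
  shows "G n y \<noteq> 0"
proof
  assume g: "G n y = 0"
  have "0 \<le> hzero n i" using Z1'[of i n] assms by simp
  then have "y \<in> Zn n" using g assms by (simp add: Zn_def)
  then obtain p where p: "p < length (sorted_list_of_set (Zn n))" "sorted_list_of_set (Zn n) ! p = y"
    by (metis Zn_finite in_set_conv_nth set_sorted_list_of_set)
  have l: "i < length (sorted_list_of_set (Zn n))" using len_L[of n] assms by simp
  have "i - 1 < p" using assms(3) L_mono_iff[of "i-1" n p] p l unfolding hzero_eq by simp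
  moreover have "p < i" using assms(4) L_mono_iff[of p n i] p l unfolding hzero_eq by simp
  ultimately show False by simp
qed

lemma Z4: assumes "1 \<le> hk n" "0 \<le> y" "y < hzero n 1"
  shows "G n y \<noteq> 0"
proof
  assume g: "G n y = 0"
  then have "y \<in> Zn n" using assms by (simp add: Zn_def)
  then obtain p where p: "p < length (sorted_list_of_set (Zn n))" "sorted_list_of_set (Zn n) ! p = y"
    by (metis Zn_finite in_set_conv_nth set_sorted_list_of_set)
  have l: "0 < length (sorted_list_of_set (Zn n))" using len_L[of n] assms by simp
  have "p < 0" using assms(3) L_mono_iff[of p n 0] p l unfolding hzero_eq by simp
  then show False by simp
qed

lemma Z5: assumes "2 \<le> i" "i \<le> hk n" shows "0 < hzero n i"
proof -
  have "0 \<le> hzero n (i-1)" using Z1'[of "i-1" n] assms by simp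
  moreover have "hzero n (i-1) < hzero n (Suc (i-1))" using Z2[of "i-1" n] assms by simp
  moreover have "Suc (i-1) = i" using assms by simp
  ultimately show ?thesis by simp
qed

lemma nodal_sign:
  assumes "\<alpha> < \<gamma>" "\<And>y. \<alpha> < y \<Longrightarrow> y < \<gamma> \<Longrightarrow> G n y \<noteq> 0"
  shows "\<exists>\<sigma>. (\<sigma> = 1 \<or> \<sigma> = -1) \<and> (\<forall>y. \<alpha> < y \<and> y < \<gamma> \<longrightarrow> \<sigma> * G n y > 0)"
proof -
  define m where "m = (\<alpha>+\<gamma>)/2"
  have m: "\<alpha> < m" "m < \<gamma>" using assms(1) by (auto simp: m_def)
  have nz: "G n m \<noteq> 0" using assms(2) m by blast
  define \<sigma> where "\<sigma> = (if G n m > 0 then (1::real) else -1)"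
  have "\<sigma> * G n y > 0" if y: "\<alpha> < y" "y < \<gamma>" for y
  proof (rule ccontr)
    assume "\<not> \<sigma> * G n y > 0"
    moreover have "G n y \<noteq> 0" using assms(2) y by blast
    ultimately have opp: "(G n m > 0 \<and> G n y < 0) \<or> (G n m < 0 \<and> G n y > 0)"
      using nz by (auto simp: \<sigma>_def split: if_splits)
    have "\<exists>z. min m y \<le> z \<and> z \<le> max m y \<and> G n z = 0"
    proof (cases "m \<le> y")
      case True
      from opp show ?thesis
      proof
        assume h: "G n m > 0 \<and> G n y < 0"
        from IVT2'[OF _ _ True G_cont, of n 0] h obtain z where "m \<le> z" "z \<le> y" "G n z = 0" by auto
        then show ?thesis using True by auto
      next
        assume h: "G n m < 0 \<and> G n y > 0"
        from IVT'[OF _ _ True G_cont, of n 0] h obtain z where "m \<le> z" "z \<le> y" "G n z = 0" by auto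
        then show ?thesis using True by auto
      qed
    next
      case False
      then have F: "y \<le> m" by simp
      from opp show ?thesis
      proof
        assume h: "G n m > 0 \<and> G n y < 0"
        from IVT'[OF _ _ F G_cont, of n 0] h obtain z where "y \<le> z" "z \<le> m" "G n z = 0" by auto
        then show ?thesis using F by auto
      next
        assume h: "G n m < 0 \<and> G n y > 0"
        from IVT2'[OF _ _ F G_cont, of n 0] h obtain z where "y \<le> z" "z \<le> m" "G n z = 0" by auto
        then show ?thesis using F by auto
      qed
    qed
    then obtain z where "min m y \<le> z" "z \<le> max m y" "G n z = 0" by blast
    moreover have "\<alpha> < z" "z < \<gamma>" using calculation m y by auto
    ultimately show False using assms(2) by blast
  qed
  then show ?thesis by (intro exI[of _ \<sigma>]) (auto simp: \<sigma>_def)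
qed

lemma taylor2:
  assumes d1: "\<And>y. (f has_real_derivative f1 y) (at y)"
    and d2: "\<And>y. (f1 has_real_derivative f2 y) (at y)" and h: "h \<noteq> 0"
  shows "\<exists>\<xi>. \<bar>\<xi> - y\<bar> \<le> \<bar>h\<bar> \<and> f (y+h) = f y + f1 y * h + f2 \<xi> * h^2/2"
proof -
  define diff where "diff = (\<lambda>m::nat. if m = 0 then f else if m = 1 then f1 else f2)"
  have D: "\<forall>m t. m < 2 \<and> min y (y+h) \<le> t \<and> t \<le> max y (y+h) \<longrightarrow> DERIV (diff m) t :> diff (Suc m) t"
    using d1 d2 by (auto simp: diff_def less_2_cases_iff)
  from Taylor[where n=2 and diff=diff and f=f and a="min y (y+h)" and b="max y (y+h)" and c=y and x="y+h", OF _ _ D] h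
  obtain t where t: "(if y + h < y then y + h < t \<and> t < y else y < t \<and> t < y + h)"
    "f (y+h) = (\<Sum>m<2. diff m y / fact m * (y + h - y) ^ m) + diff 2 t / fact 2 * (y + h - y)^2"
    by (auto simp: diff_def)
  have "\<bar>t - y\<bar> \<le> \<bar>h\<bar>" using t(1) by (auto split: if_splits)
  moreover have "f (y+h) = f y + f1 y * h + f2 t * h^2/2"
    using t(2) by (simp add: diff_def numeral_2_eq_2)
  ultimately show ?thesis by blast
qed

lemma core:
  fixes \<psi> \<psi>1 \<psi>2 :: "real \<Rightarrow> real" and E \<alpha> \<gamma> \<epsilon> :: real
  assumes d1: "\<And>y. (\<psi> has_real_derivative \<psi>1 y) (at y)"
    and d2: "\<And>y. (\<psi>1 has_real_derivative \<psi>2 y) (at y)"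
    and c2: "\<And>y. isCont \<psi>2 y"
    and ode: "\<And>y. \<psi>2 y = (y^2 - E) * \<psi> y"
    and pos: "\<And>y. \<alpha> < y \<Longrightarrow> y < \<gamma> \<Longrightarrow> \<psi> y > 0"
    and ag: "\<alpha> < \<gamma>" and ep: "\<epsilon> > 0" and E: "E > 0"
  shows "\<exists>F m \<delta>. m > 0 \<and> \<delta> > 0 \<and> (\<forall>y. \<alpha> \<le> y \<and> y \<le> \<gamma> \<longrightarrow> F y \<ge> m) \<and>
    (\<forall>s y. 0 < s \<and> s \<le> \<delta> \<and> \<alpha> \<le> y - s \<and> y + s \<le> \<gamma> \<longrightarrow>
       2*F y - F (y+s) - F (y-s) + s^2*y^2*F y \<ge> s^2*(E-\<epsilon>)*F y)"
proof -
  define Y where "Y = max \<bar>\<alpha>\<bar> \<bar>\<gamma>\<bar>"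
  define c where "c = (\<alpha>+\<gamma>)/2"
  define K where "K = 2*E + 6*Y^2 + 1"
  define \<eta> where "\<eta> = min (1/2) (\<epsilon>/(2*K))"
  define \<tau> where "\<tau> = 1 - \<eta>"
  have K: "K > 0" using E by (simp add: K_def add_pos_nonneg)
  have eta: "0 < \<eta>" "\<eta> \<le> 1/2" "\<eta> * K \<le> \<epsilon>/2" using ep K
    by (auto simp: \<eta>_def min_def field_simps)
  have tau: "1/2 \<le> \<tau>" "\<tau> < 1" using eta by (auto simp: \<tau>_def)
  define U where "U y = c + \<tau>*(y-c)" for y
  have U_in: "\<alpha> < U y \<and> U y < \<gamma>" if "\<alpha> \<le> y" "y \<le> \<gamma>" for y
  proof -
    have "U y - \<alpha> = (1-\<tau>)*(c-\<alpha>) + \<tau>*(y-\<alpha>)" by (simp add: U_def algebra_simps)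
    moreover have "(1-\<tau>)*(c-\<alpha>) > 0" using tau ag by (simp add: c_def)
    moreover have "\<tau>*(y-\<alpha>) \<ge> 0" using tau that by simp
    moreover have "\<gamma> - U y = (1-\<tau>)*(\<gamma>-c) + \<tau>*(\<gamma>-y)" by (simp add: U_def algebra_simps)
    moreover have "(1-\<tau>)*(\<gamma>-c) > 0" using tau ag by (simp add: c_def)
    moreover have "\<tau>*(\<gamma>-y) \<ge> 0" using tau that by simp
    ultimately show ?thesis by linarith
  qed
  have key: "\<tau>^2*(E - (U y)^2) + y^2 \<ge> E - \<epsilon>/2" if y: "\<alpha> \<le> y" "y \<le> \<gamma>" for y
  proof -
    let ?u = "U y"
    have uY: "\<bar>?u\<bar> \<le> Y" using U_in[OF y] by (auto simp: Y_def)
    have yY: "\<bar>y\<bar> \<le> Y" using y by (auto simp: Y_def)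
    have cY: "\<bar>c\<bar> \<le> Y" using ag by (auto simp: Y_def c_def)
    have e1: "y^2 - \<tau>^2*?u^2 = (y - \<tau>*?u)*(y + \<tau>*?u)" by (simp add: algebra_simps power2_eq_square)
    have e2: "y - \<tau>*?u = \<eta>*((2-\<eta>)*y - \<tau>*c)" by (simp add: \<tau>_def U_def algebra_simps power2_eq_square)
    have b1: "\<bar>(2-\<eta>)*y - \<tau>*c\<bar> \<le> 3*Y"
    proof -
      have "\<bar>(2-\<eta>)*y\<bar> = (2-\<eta>)*\<bar>y\<bar>" using eta by (simp add: abs_mult)
      also have "\<dots> \<le> 2*\<bar>y\<bar>" using eta by (simp add: mult_right_mono)
      also have "\<dots> \<le> 2*Y" using yY by simp
      finally have "\<bar>(2-\<eta>)*y\<bar> \<le> 2*Y" .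
      moreover have "\<bar>\<tau>*c\<bar> \<le> Y"
      proof -
        have "\<bar>\<tau>*c\<bar> = \<tau>*\<bar>c\<bar>" using tau by (simp add: abs_mult)
        also have "\<dots> \<le> \<bar>c\<bar>" using tau by (simp add: mult_left_le_one_le)
        finally show ?thesis using cY by simp
      qed
      ultimately show ?thesis by linarith
    qed
    have b2: "\<bar>y + \<tau>*?u\<bar> \<le> 2*Y"
    proof -
      have "\<bar>\<tau>*?u\<bar> = \<tau>*\<bar>?u\<bar>" using tau by (simp add: abs_mult)
      also have "\<dots> \<le> \<bar>?u\<bar>" using tau by (simp add: mult_left_le_one_le)
      finally have "\<bar>\<tau>*?u\<bar> \<le> Y" using uY by simp
      then show ?thesis using yY by linarith
    qed
    have "\<bar>y^2 - \<tau>^2*?u^2\<bar> \<le> \<eta>*(3*Y)*(2*Y)"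
      unfolding e1 e2 abs_mult using eta b1 b2
      by (intro mult_mono) (auto intro: mult_left_mono)
    then have t1: "y^2 - \<tau>^2*?u^2 \<ge> - (\<eta>*(6*Y^2))" by (simp add: power2_eq_square algebra_simps)
    have t2: "\<tau>^2 * E \<ge> E - 2*\<eta>*E"
    proof -
      have "\<tau>^2 * E = E - 2*\<eta>*E + \<eta>^2*E" by (simp add: \<tau>_def power2_eq_square algebra_simps)
      moreover have "\<eta>^2*E \<ge> 0" using E by simp
      ultimately show ?thesis by linarith
    qed
    have "\<tau>^2*(E - ?u^2) + y^2 = \<tau>^2*E + (y^2 - \<tau>^2*?u^2)" by (simp add: algebra_simps)
    also have "\<dots> \<ge> E - \<eta>*(2*E + 6*Y^2)" using t1 t2 by (simp add: algebra_simps)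
    finally have "\<tau>^2*(E - ?u^2) + y^2 \<ge> E - \<eta>*(2*E + 6*Y^2)" .
    moreover have "\<eta>*(2*E + 6*Y^2) \<le> \<eta>*K" using eta by (simp add: K_def)
    ultimately show ?thesis using eta by linarith
  qed
  define F where "F y = \<psi> (U y)" for y
  define F1 where "F1 y = \<psi>1 (U y) * \<tau>" for y
  define F2 where "F2 y = \<psi>2 (U y) * \<tau> * \<tau>" for y
  have dU: "(U has_real_derivative \<tau>) (at y)" for y
    unfolding U_def by (auto intro!: derivative_eq_intros)
  have dF: "(F has_real_derivative F1 y) (at y)" for y
    unfolding F_def F1_def using DERIV_chain2[OF d1 dU] by simp
  have dF1: "(F1 has_real_derivative F2 y) (at y)" for y
    unfolding F1_def F2_def using DERIV_cmult_right[OF DERIV_chain2[OF d2 dU], of \<tau>] by simp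
  have cF: "continuous_on {\<alpha>..\<gamma>} F"
    using dF DERIV_isCont continuous_at_imp_continuous_on by blast
  have cF2: "continuous_on {\<alpha>..\<gamma>} F2"
  proof -
    have "isCont F2 y" for y
      unfolding F2_def using isCont_o2[OF DERIV_isCont[OF dU] c2] by (auto intro!: continuous_intros)
    then show ?thesis by (simp add: continuous_at_imp_continuous_on)
  qed
  obtain y0 where y0: "y0 \<in> {\<alpha>..\<gamma>}" "\<forall>y\<in>{\<alpha>..\<gamma>}. F y0 \<le> F y"
    using continuous_attains_inf[OF compact_Icc _ cF] ag by auto
  define m where "m = F y0"
  have m: "m > 0" using pos U_in y0(1) by (auto simp: m_def F_def)
  have Fm: "\<forall>y. \<alpha> \<le> y \<and> y \<le> \<gamma> \<longrightarrow> F y \<ge> m" using y0 by (auto simp: m_def)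
  have uc: "uniformly_continuous_on {\<alpha>..\<gamma>} F2"
    by (rule compact_uniformly_continuous[OF cF2 compact_Icc])
  obtain d where d: "d > 0" "\<forall>x\<in>{\<alpha>..\<gamma>}. \<forall>x'\<in>{\<alpha>..\<gamma>}. dist x' x < d \<longrightarrow> dist (F2 x') (F2 x) < \<epsilon>*m/2"
    using uc[unfolded uniformly_continuous_on_def, rule_format, of "\<epsilon>*m/2"] ep m by auto
  define \<delta> where "\<delta> = d/2"
  have main: "2*F y - F (y+s) - F (y-s) + s^2*y^2*F y \<ge> s^2*(E-\<epsilon>)*F y"
    if s: "0 < s" "s \<le> \<delta>" "\<alpha> \<le> y - s" "y + s \<le> \<gamma>" for s y
  proof -
    obtain \<xi>1 where x1: "\<bar>\<xi>1 - y\<bar> \<le> s" "F (y+s) = F y + F1 y * s + F2 \<xi>1 * s^2/2"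
      using taylor2[OF dF dF1, of s y] s by auto
    obtain \<xi>2 where x2: "\<bar>\<xi>2 - y\<bar> \<le> s" "F (y-s) = F y - F1 y * s + F2 \<xi>2 * s^2/2"
      using taylor2[OF dF dF1, of "-s" y] s by auto
    have yin: "y \<in> {\<alpha>..\<gamma>}" using s by auto
    have "\<xi>1 \<in> {\<alpha>..\<gamma>}" "\<xi>2 \<in> {\<alpha>..\<gamma>}" using x1(1) x2(1) s by auto
    then have "dist \<xi>1 y < d" "dist \<xi>2 y < d" using x1(1) x2(1) s d by (auto simp: dist_real_def \<delta>_def)
    then have "\<bar>F2 \<xi>1 - F2 y\<bar> < \<epsilon>*m/2" "\<bar>F2 \<xi>2 - F2 y\<bar> < \<epsilon>*m/2"
      using d(2) yin \<open>\<xi>1 \<in> {\<alpha>..\<gamma>}\<close> \<open>\<xi>2 \<in> {\<alpha>..\<gamma>}\<close> by (auto simp: dist_real_def)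
    then have sumb: "F2 \<xi>1 + F2 \<xi>2 \<le> 2*F2 y + \<epsilon>*m" by linarith
    have eqd: "2*F y - F (y+s) - F (y-s) = -(F2 \<xi>1 + F2 \<xi>2) * s^2/2"
      using x1(2) x2(2) by (simp add: algebra_simps)
    have s2: "s^2 > 0" using s by simp
    have P0: "-(F2 \<xi>1 + F2 \<xi>2) * s^2/2 \<ge> -(2*F2 y + \<epsilon>*m) * s^2/2"
      using sumb s2 by (simp add: divide_right_mono mult_right_mono)
    have F2y: "F2 y = ((U y)^2 - E) * \<tau>^2 * F y"
      by (simp add: F2_def F_def ode power2_eq_square)
    have R: "-(2*F2 y + \<epsilon>*m) * s^2/2 = s^2*(\<tau>^2*(E-(U y)^2)*F y) - s^2*(\<epsilon>*m/2)"
      unfolding F2y by (simp add: field_simps)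
    have P: "-(F2 \<xi>1 + F2 \<xi>2) * s^2/2 \<ge> s^2*(\<tau>^2*(E-(U y)^2)*F y) - s^2*(\<epsilon>*m/2)"
      using P0 R by linarith
    have Q: "s^2*((\<tau>^2*(E-(U y)^2)+y^2)*F y) = s^2*(\<tau>^2*(E-(U y)^2)*F y) + s^2*y^2*F y"
      by (simp add: algebra_simps)
    have A: "2*F y - F (y+s) - F (y-s) + s^2*y^2*F y \<ge>
        s^2 * ((\<tau>^2*(E - (U y)^2) + y^2) * F y) - s^2*(\<epsilon>*m/2)"
      using P Q eqd by linarith
    have Fy: "F y \<ge> m" using Fm yin by auto
    have "(\<tau>^2*(E - (U y)^2) + y^2) * F y \<ge> (E - \<epsilon>/2) * F y"
      using key[of y] yin m Fy by (intro mult_right_mono) auto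
    moreover have "\<epsilon>*m/2 \<le> \<epsilon>*F y/2" using Fy ep by simp
    ultimately have "(\<tau>^2*(E - (U y)^2) + y^2) * F y - \<epsilon>*m/2 \<ge> (E-\<epsilon>)*F y"
      by (simp add: algebra_simps)
    then have "s^2*((\<tau>^2*(E - (U y)^2) + y^2) * F y - \<epsilon>*m/2) \<ge> s^2*((E-\<epsilon>)*F y)"
      using s2 by (intro mult_left_mono) auto
    then show ?thesis using A by (simp add: algebra_simps)
  qed
  show ?thesis
    apply (rule exI[of _ F], rule exI[of _ m], rule exI[of _ \<delta>])
    using m d Fm main by (auto simp: \<delta>_def)
qed

lemma maxprin:
  fixes \<phi> :: "int \<Rightarrow> real"
  assumes fin: "finite I" and phipos: "\<forall>x\<in>I. \<phi> x > 0"
    and nb: "\<forall>x\<in>I. \<phi> (x+1) \<ge> 0 \<and> \<phi> (x-1) \<ge> 0"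
    and sup: "\<forall>x\<in>I. 2*\<phi> x - \<phi> (x+1) - \<phi> (x-1) + \<kappa>^4 * (real_of_int x)^2 * \<phi> x \<ge> lam * \<phi> x"
    and mu: "\<mu> \<in> dir_spectrum \<kappa> I"
  shows "Re \<mu> \<ge> lam"
proof -
  obtain f where f0: "\<forall>x. x \<notin> I \<longrightarrow> f x = 0" and fnz: "\<exists>x\<in>I. f x \<noteq> 0"
    and eig: "\<forall>x\<in>I. Hop \<kappa> f x = \<mu> * f x"
    using mu unfolding dir_spectrum_def by blast
  define r where "r x = cmod (f x) / \<phi> x" for x
  have ne: "I \<noteq> {}" using fnz by blast
  obtain x0 where x0: "x0 \<in> I" "r x0 = Max (r ` I)"
    using Max_in[OF finite_imageI[OF fin] ] ne by (metis (no_types, lifting) image_iff image_is_empty)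
  have rmax: "r x \<le> r x0" if "x \<in> I" for x
  proof -
    have "r x \<le> Max (r ` I)" by (rule Max_ge) (use fin that in auto)
    then show ?thesis using x0(2) by simp
  qed
  obtain x1 where x1: "x1 \<in> I" "f x1 \<noteq> 0" using fnz by blast
  have "r x1 > 0" using x1 phipos by (simp add: r_def)
  then have r0: "r x0 > 0" using rmax[OF x1(1)] by simp
  have bnd: "cmod (f x) \<le> r x0 * \<phi> x" if "x = x0 + 1 \<or> x = x0 - 1" for x
  proof (cases "x \<in> I")
    case True
    then have "r x \<le> r x0" by (rule rmax)
    then show ?thesis using phipos True by (simp add: r_def divide_le_eq mult.commute)
  next
    case False
    then have "f x = 0" using f0 by simp
    moreover have "\<phi> x \<ge> 0" using nb x0(1) that by auto
    ultimately show ?thesis using r0 by simp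
  qed
  define a where "a = f x0"
  define V where "V = \<kappa>^4 * (real_of_int x0)^2"
  have ph0: "\<phi> x0 > 0" using phipos x0(1) by simp
  have acm: "cmod a = r x0 * \<phi> x0" using ph0 by (simp add: r_def a_def)
  have apos: "cmod a > 0" using acm r0 ph0 by simp
  have eq: "\<mu> * a = (2 + of_real V) * a - f (x0+1) - f (x0-1)"
    using eig x0(1) by (simp add: Hop_def a_def V_def algebra_simps)
  have M: "\<mu> * (a * cnj a) = ((2 + of_real V) * a - f (x0+1) - f (x0-1)) * cnj a"
    by (simp only: mult.assoc[symmetric] eq)
  have hb: "a * cnj a = complex_of_real ((cmod a)^2)" by (rule complex_norm_square[symmetric])
  have X: "((2 + of_real V) * a - f (x0+1) - f (x0-1)) * cnj a
     = (2 + of_real V) * (a * cnj a) - f (x0+1) * cnj a - f (x0-1) * cnj a"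
    by (simp add: left_diff_distrib mult.assoc)
  have R: "Re (((2 + of_real V) * a - f (x0+1) - f (x0-1)) * cnj a)
      = (2 + V) * (cmod a)^2 - Re (f (x0+1) * cnj a) - Re (f (x0-1) * cnj a)"
    unfolding X hb by simp
  have L: "Re (\<mu> * (a * cnj a)) = Re \<mu> * (cmod a)^2" unfolding hb by simp
  have E1: "Re \<mu> * (cmod a)^2 = (2 + V) * (cmod a)^2 - Re (f (x0+1) * cnj a) - Re (f (x0-1) * cnj a)"
    by (metis L R M)
  have "Re (f (x0+1) * cnj a) \<le> cmod (f (x0+1)) * cmod a"
    using complex_Re_le_cmod[of "f (x0+1) * cnj a"] by (simp add: norm_mult)
  also have "\<dots> \<le> r x0 * \<phi> (x0+1) * cmod a" using bnd[of "x0+1"] apos by (simp add: mult_right_mono)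
  finally have b1: "Re (f (x0+1) * cnj a) \<le> r x0 * \<phi> (x0+1) * cmod a" .
  have "Re (f (x0-1) * cnj a) \<le> cmod (f (x0-1)) * cmod a"
    using complex_Re_le_cmod[of "f (x0-1) * cnj a"] by (simp add: norm_mult)
  also have "\<dots> \<le> r x0 * \<phi> (x0-1) * cmod a" using bnd[of "x0-1"] apos by (simp add: mult_right_mono)
  finally have b2: "Re (f (x0-1) * cnj a) \<le> r x0 * \<phi> (x0-1) * cmod a" .
  have "Re \<mu> * (cmod a)^2 \<ge> cmod a * r x0 * ((2+V) * \<phi> x0 - \<phi> (x0+1) - \<phi> (x0-1))"
    using E1 b1 b2 acm by (simp add: algebra_simps power2_eq_square)
  moreover have "(2+V) * \<phi> x0 - \<phi> (x0+1) - \<phi> (x0-1) \<ge> lam * \<phi> x0"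
    using bspec[OF sup x0(1)] by (simp add: V_def algebra_simps)
  then have "cmod a * r x0 * ((2+V) * \<phi> x0 - \<phi> (x0+1) - \<phi> (x0-1)) \<ge> cmod a * r x0 * (lam * \<phi> x0)"
    using apos r0 by (intro mult_left_mono) auto
  moreover have "cmod a * r x0 * (lam * \<phi> x0) = lam * (cmod a)^2"
    using acm by (simp add: power2_eq_square algebra_simps)
  ultimately have "Re \<mu> * (cmod a)^2 \<ge> lam * (cmod a)^2" by linarith
  then show ?thesis using apos by simp
qed

fun Qp :: "real \<Rightarrow> int \<Rightarrow> nat \<Rightarrow> complex poly" where
  "Qp \<kappa> a 0 = 0"
| "Qp \<kappa> a (Suc 0) = 1"
| "Qp \<kappa> a (Suc (Suc k)) = [: 2 + of_real (\<kappa>^4 * (real_of_int (a + int k))^2), -1 :] * Qp \<kappa> a (Suc k) - Qp \<kappa> a k"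

lemma Qp_coeff: "(\<forall>i\<ge>k. coeff (Qp \<kappa> a k) i = 0) \<and> (\<forall>i>k. coeff (Qp \<kappa> a (Suc k)) i = 0)
    \<and> coeff (Qp \<kappa> a (Suc k)) k = (-1)^k"
proof (induction k)
  case 0 show ?case by (simp add: coeff_1)
next
  case (Suc k)
  have A: "\<forall>i\<ge>Suc k. coeff (Qp \<kappa> a (Suc k)) i = 0" using Suc by auto
  have B: "\<forall>i>Suc k. coeff (Qp \<kappa> a (Suc (Suc k))) i = 0"
  proof (intro allI impI)
    fix i assume i: "i > Suc k"
    then obtain j where j: "i = Suc j" "j > k" by (cases i) auto
    show "coeff (Qp \<kappa> a (Suc (Suc k))) i = 0"
      using Suc i j by (simp add: coeff_diff mult_pCons_left coeff_pCons)
  qed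
  have C: "coeff (Qp \<kappa> a (Suc (Suc k))) (Suc k) = (-1)^(Suc k)"
    using Suc by (simp add: coeff_diff mult_pCons_left coeff_pCons)
  show ?case using A B C by simp
qed

lemma Qp_nonconst: "k \<ge> 1 \<Longrightarrow> \<not> constant (poly (Qp \<kappa> a (Suc k)))"
proof -
  assume k: "k \<ge> 1"
  have "coeff (Qp \<kappa> a (Suc k)) k \<noteq> 0" using Qp_coeff[of k \<kappa> a] by simp
  then have "degree (Qp \<kappa> a (Suc k)) \<ge> k" by (rule le_degree)
  then have "degree (Qp \<kappa> a (Suc k)) \<noteq> 0" using k by linarith
  then show ?thesis by (simp add: constant_degree)
qed

lemma spec_nonempty:
  assumes "a \<le> b"
  shows "dir_spectrum \<kappa> {a..b} \<noteq> {}"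
proof -
  define N where "N = nat (b - a + 1)"
  have N: "N \<ge> 1" using assms by (simp add: N_def)
  obtain \<mu> where root: "poly (Qp \<kappa> a (Suc N)) \<mu> = 0"
    using fundamental_theorem_of_algebra[OF Qp_nonconst[OF N]] by blast
  define f where "f x = (if a \<le> x \<and> x \<le> b then poly (Qp \<kappa> a (nat (x - a + 1))) \<mu> else 0)" for x
  have "\<forall>x. x \<notin> {a..b} \<longrightarrow> f x = 0" by (simp add: f_def)
  moreover have "f a \<noteq> 0" using assms by (simp add: f_def)
  moreover have "Hop \<kappa> f x = \<mu> * f x" if x: "x \<in> {a..b}" for x
  proof -
    define k where "k = nat (x - a)"
    have xk: "x = a + int k" using x by (simp add: k_def)
    have fx: "f x = poly (Qp \<kappa> a (Suc k)) \<mu>" using x by (simp add: f_def k_def Suc_nat_eq_nat_zadd1 add.commute)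
    have fm: "f (x-1) = poly (Qp \<kappa> a k) \<mu>"
    proof (cases "k = 0")
      case True then show ?thesis using xk by (simp add: f_def)
    next
      case False
      then have "nat (x - 1 - a + 1) = k" using xk by simp
      then show ?thesis using x False xk by (simp add: f_def)
    qed
    have fp: "f (x+1) = poly (Qp \<kappa> a (Suc (Suc k))) \<mu>"
    proof (cases "x + 1 \<le> b")
      case True
      then have "nat (x + 1 - a + 1) = Suc (Suc k)" using xk by simp
      then show ?thesis using x True by (simp add: f_def)
    next
      case False
      then have "Suc (Suc k) = Suc N" using xk x by (simp add: N_def)
      then show ?thesis using False root by (simp add: f_def)
    qed
    show ?thesis
      unfolding Hop_def fx fm fp using xk by (simp add: algebra_simps)
  qed
  ultimately have "\<mu> \<in> dir_spectrum \<kappa> {a..b}"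
    unfolding dir_spectrum_def using assms by blast
  then show ?thesis by blast
qed

lemma Hop_refl: "Hop \<kappa> (\<lambda>x. f (-x)) x = Hop \<kappa> f (-x)"
proof -
  have a: "-(x+1) = -x - 1" and b: "-(x-1) = -x + 1" by simp_all
  show ?thesis unfolding Hop_def a b by simp
qed

lemma dir_spectrum_refl: "dir_spectrum \<kappa> (uminus ` I) = dir_spectrum \<kappa> I"
proof -
  have *: "dir_spectrum \<kappa> I \<subseteq> dir_spectrum \<kappa> (uminus ` I)" for I
  proof
    fix \<mu> assume "\<mu> \<in> dir_spectrum \<kappa> I"
    then obtain f where f: "\<forall>x. x \<notin> I \<longrightarrow> f x = 0" "\<exists>x\<in>I. f x \<noteq> 0" "\<forall>x\<in>I. Hop \<kappa> f x = \<mu> * f x"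
      unfolding dir_spectrum_def by blast
    define g where "g x = f (-x)" for x
    have "\<forall>x. x \<notin> uminus ` I \<longrightarrow> g x = 0" using f(1) by (auto simp: g_def image_iff) (metis minus_minus)
    moreover have "\<exists>x\<in>uminus ` I. g x \<noteq> 0" using f(2) by (auto simp: g_def)
    moreover have "\<forall>x\<in>uminus ` I. Hop \<kappa> g x = \<mu> * g x"
      using f(3) Hop_refl[of \<kappa> f] by (auto simp: g_def[abs_def])
    ultimately show "\<mu> \<in> dir_spectrum \<kappa> (uminus ` I)" unfolding dir_spectrum_def by blast
  qed
  have "uminus ` uminus ` I = I" by (simp add: image_image)
  then show ?thesis using *[of I] *[of "uminus ` I"] by auto
qed

lemma psi_facts:
  fixes \<sigma> :: real and n :: nat
  defines "\<psi> \<equiv> \<lambda>y. \<sigma> * exp (y^2/2) * G n y"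
    and "\<psi>1 \<equiv> \<lambda>y. \<sigma> * exp (y^2/2) * (y * G n y + G (Suc n) y)"
    and "\<psi>2 \<equiv> \<lambda>y. \<sigma> * exp (y^2/2) * ((y^2 - (2*real n+1)) * G n y)"
  shows "\<And>y. (\<psi> has_real_derivative \<psi>1 y) (at y)"
    and "\<And>y. (\<psi>1 has_real_derivative \<psi>2 y) (at y)"
    and "\<And>y. isCont \<psi>2 y"
    and "\<And>y. \<psi>2 y = (y^2 - (2*real n+1)) * \<psi> y"
proof -
  fix y
  show "(\<psi> has_real_derivative \<psi>1 y) (at y)"
    unfolding \<psi>_def \<psi>1_def
    by (auto intro!: derivative_eq_intros G_deriv simp: algebra_simps)
  have "(\<psi>1 has_real_derivative
      \<sigma> * (exp (y^2/2) * y) * (y * G n y + G (Suc n) y) + \<sigma> * exp (y^2/2) * (G n y + y * G (Suc n) y + G (Suc (Suc n)) y)) (at y)"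
    unfolding \<psi>1_def
    by (auto intro!: derivative_eq_intros G_deriv simp: algebra_simps)
  moreover have "\<sigma> * (exp (y^2/2) * y) * (y * G n y + G (Suc n) y) + \<sigma> * exp (y^2/2) * (G n y + y * G (Suc n) y + G (Suc (Suc n)) y) = \<psi>2 y"
    unfolding \<psi>2_def G_rec by (simp add: algebra_simps power2_eq_square)
  ultimately show "(\<psi>1 has_real_derivative \<psi>2 y) (at y)" by simp
  have "continuous_on UNIV \<psi>2" unfolding \<psi>2_def by (intro continuous_intros G_cont) auto
  then show "isCont \<psi>2 y" by (simp add: continuous_on_eq_continuous_at)
  show "\<psi>2 y = (y^2 - (2*real n+1)) * \<psi> y" by (simp add: \<psi>2_def \<psi>_def)
qed

lemma final_generic:
  fixes \<alpha> \<gamma> \<sigma> :: real and \<beta> :: "real \<Rightarrow> real" and I :: "real \<Rightarrow> int set"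
  assumes ag: "\<alpha> < \<gamma>"
    and sg: "\<forall>y. \<alpha> < y \<and> y < \<gamma> \<longrightarrow> \<sigma> * G n y > 0"
    and bl: "(\<beta> \<longlongrightarrow> 1) (at_right 0)"
    and ev: "\<forall>\<^sub>F \<kappa> in at_right 0. \<exists>a b. I \<kappa> = {a..b} \<and> a \<le> b \<and>
        (\<forall>x\<in>I \<kappa>. \<alpha> \<le> \<beta> \<kappa> * \<kappa> * real_of_int (x-1) \<and> \<beta> \<kappa> * \<kappa> * real_of_int (x+1) \<le> \<gamma>)"
  shows "Liminf (at_right (0::real)) (\<lambda>\<kappa>. ereal (Inf (Re ` dir_spectrum \<kappa> (I \<kappa>)) / \<kappa>^2)) \<ge> ereal (2 * real n + 1)"
proof -
  define E where "E = 2 * real n + 1"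
  have E: "E > 0" by (simp add: E_def)
  define \<psi> where "\<psi> = (\<lambda>y. \<sigma> * exp (y^2/2) * G n y)"
  define \<psi>1 where "\<psi>1 = (\<lambda>y. \<sigma> * exp (y^2/2) * (y * G n y + G (Suc n) y))"
  define \<psi>2 where "\<psi>2 = (\<lambda>y. \<sigma> * exp (y^2/2) * ((y^2 - (2*real n+1)) * G n y))"
  have pf1: "\<And>y. (\<psi> has_real_derivative \<psi>1 y) (at y)"
    unfolding \<psi>_def \<psi>1_def by (rule psi_facts(1))
  have pf2: "\<And>y. (\<psi>1 has_real_derivative \<psi>2 y) (at y)"
    unfolding \<psi>2_def \<psi>1_def by (rule psi_facts(2))
  have pf3: "\<And>y. isCont \<psi>2 y"
    unfolding \<psi>2_def by (rule psi_facts(3))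
  have pf4: "\<And>y. \<psi>2 y = (y^2 - E) * \<psi> y"
    unfolding \<psi>2_def \<psi>_def E_def by (rule psi_facts(4))
  have pos: "\<psi> y > 0" if "\<alpha> < y" "y < \<gamma>" for y
  proof -
    have "\<sigma> * G n y > 0" using sg that by blast
    moreover have "\<psi> y = (\<sigma> * G n y) * exp (y^2/2)" by (simp add: \<psi>_def algebra_simps)
    ultimately show ?thesis by simp
  qed
  have key: "\<forall>\<^sub>F \<kappa> in at_right 0. Inf (Re ` dir_spectrum \<kappa> (I \<kappa>)) / \<kappa>^2 \<ge> r" if r: "r < E" for r
  proof -
    define \<epsilon> where "\<epsilon> = (E - r)/2"
    have ep: "\<epsilon> > 0" using r by (simp add: \<epsilon>_def)
    obtain F m \<delta> where m: "m > 0" and d: "\<delta> > 0" and Fm: "\<forall>y. \<alpha> \<le> y \<and> y \<le> \<gamma> \<longrightarrow> F y \<ge> m"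
      and Fs: "\<forall>s y. 0 < s \<and> s \<le> \<delta> \<and> \<alpha> \<le> y - s \<and> y + s \<le> \<gamma> \<longrightarrow>
          2*F y - F (y+s) - F (y-s) + s^2*y^2*F y \<ge> s^2*(E-\<epsilon>)*F y"
      using core[OF pf1 pf2 pf3 pf4 pos ag ep E] by blast
    define Y where "Y = max \<bar>\<alpha>\<bar> \<bar>\<gamma>\<bar>"
    define w where "w b = b^2 * (E - \<epsilon> - Y^2 * \<bar>1 - 1/b^4\<bar>)" for b :: real
    have "((\<lambda>\<kappa>. w (\<beta> \<kappa>)) \<longlongrightarrow> w 1) (at_right 0)"
      unfolding w_def by (intro tendsto_intros bl) auto
    moreover have "w 1 > r" using r by (simp add: w_def \<epsilon>_def field_simps)
    ultimately have ev1: "\<forall>\<^sub>F \<kappa> in at_right 0. w (\<beta> \<kappa>) > r" by (rule order_tendstoD)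
    have ev2: "\<forall>\<^sub>F \<kappa> in at_right 0. \<beta> \<kappa> > 0" using order_tendstoD(1)[OF bl, of 0] by simp
    have "((\<lambda>\<kappa>. \<beta> \<kappa> * \<kappa>) \<longlongrightarrow> 1 * 0) (at_right 0)"
      by (intro tendsto_intros bl)
    then have ev3: "\<forall>\<^sub>F \<kappa> in at_right 0. \<beta> \<kappa> * \<kappa> < \<delta>" using order_tendstoD(2)[of _ 0 _ \<delta>] d by simp
    have ev4: "\<forall>\<^sub>F \<kappa> in at_right (0::real). \<kappa> > 0" by (rule eventually_at_right_less)
    show ?thesis
    proof (rule eventually_mono[OF eventually_conj[OF ev [THEN eventually_conj[OF _ ev1]] eventually_conj[OF ev2 eventually_conj[OF ev3 ev4]]]])
      fix \<kappa> assume H: "((\<exists>a b. I \<kappa> = {a..b} \<and> a \<le> b \<and>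
        (\<forall>x\<in>I \<kappa>. \<alpha> \<le> \<beta> \<kappa> * \<kappa> * real_of_int (x-1) \<and> \<beta> \<kappa> * \<kappa> * real_of_int (x+1) \<le> \<gamma>)) \<and> w (\<beta> \<kappa>) > r)
        \<and> \<beta> \<kappa> > 0 \<and> \<beta> \<kappa> * \<kappa> < \<delta> \<and> \<kappa> > 0"
      then obtain a b where ab: "I \<kappa> = {a..b}" "a \<le> b"
        and bd: "\<forall>x\<in>I \<kappa>. \<alpha> \<le> \<beta> \<kappa> * \<kappa> * real_of_int (x-1) \<and> \<beta> \<kappa> * \<kappa> * real_of_int (x+1) \<le> \<gamma>"
        by blast
      have wr: "w (\<beta> \<kappa>) > r" and bp: "\<beta> \<kappa> > 0" and sd: "\<beta> \<kappa> * \<kappa> < \<delta>" and kp: "\<kappa> > 0" using H by auto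
      define b0 where "b0 = \<beta> \<kappa>"
      define s where "s = b0 * \<kappa>"
      have sp: "s > 0" using bp kp by (simp add: s_def b0_def)
      define \<phi> where "\<phi> x = F (s * real_of_int x)" for x
      have inr: "\<alpha> \<le> s * real_of_int x \<and> s * real_of_int x \<le> \<gamma> \<and> \<alpha> \<le> s * real_of_int (x+1) \<and> s * real_of_int (x+1) \<le> \<gamma>
          \<and> \<alpha> \<le> s * real_of_int (x-1) \<and> s * real_of_int (x-1) \<le> \<gamma>" if x: "x \<in> I \<kappa>" for x
      proof -
        have h1: "\<alpha> \<le> s * real_of_int (x-1)" "s * real_of_int (x+1) \<le> \<gamma>" using bd x by (auto simp: s_def b0_def)
        have "s * real_of_int (x-1) \<le> s * real_of_int x" "s * real_of_int x \<le> s * real_of_int (x+1)"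
          using sp by (auto intro!: mult_left_mono)
        then show ?thesis using h1 by linarith
      qed
      have sup: "2*\<phi> x - \<phi> (x+1) - \<phi> (x-1) + \<kappa>^4 * (real_of_int x)^2 * \<phi> x \<ge> (r * \<kappa>^2) * \<phi> x"
        if x: "x \<in> I \<kappa>" for x
      proof -
        define y where "y = s * real_of_int x"
        have yr: "\<alpha> \<le> y - s" "y + s \<le> \<gamma>" "\<alpha> \<le> y" "y \<le> \<gamma>" using inr[OF x] by (auto simp: y_def algebra_simps)
        have ph: "\<phi> x = F y" "\<phi> (x+1) = F (y+s)" "\<phi> (x-1) = F (y-s)"
          by (auto simp: \<phi>_def y_def algebra_simps)
        have Fy: "F y \<ge> m" using Fm yr by auto
        have c1: "2*F y - F (y+s) - F (y-s) + s^2*y^2*F y \<ge> s^2*(E-\<epsilon>)*F y"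
          using Fs sp sd yr by (auto simp: s_def b0_def)
        have kx: "\<kappa>^4 * (real_of_int x)^2 = s^2*y^2 / b0^4"
          using bp by (simp add: y_def s_def b0_def field_simps power2_eq_square eval_nat_numeral mult_ac)
        have yY: "y^2 \<le> Y^2" using yr by (simp add: Y_def abs_le_square_iff[symmetric])
        have "y^2 * (1 - 1/b0^4) \<le> Y^2 * \<bar>1 - 1/b0^4\<bar>"
        proof -
          have "y^2 * (1 - 1/b0^4) \<le> y^2 * \<bar>1 - 1/b0^4\<bar>" by (intro mult_left_mono) auto
          also have "\<dots> \<le> Y^2 * \<bar>1 - 1/b0^4\<bar>" using yY by (intro mult_right_mono) auto
          finally show ?thesis .
        qed
        then have c2: "s^2 * (y^2 * (1 - 1/b0^4)) * F y \<le> s^2 * (Y^2 * \<bar>1 - 1/b0^4\<bar>) * F y"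
          using Fy m by (intro mult_right_mono mult_left_mono) auto
        have "2*\<phi> x - \<phi> (x+1) - \<phi> (x-1) + \<kappa>^4 * (real_of_int x)^2 * \<phi> x
            = (2*F y - F (y+s) - F (y-s) + s^2*y^2*F y) - s^2 * (y^2 * (1 - 1/b0^4)) * F y"
          unfolding ph kx by (simp add: algebra_simps)
        also have "\<dots> \<ge> s^2*(E-\<epsilon>)*F y - s^2 * (Y^2 * \<bar>1 - 1/b0^4\<bar>) * F y" using c1 c2 by linarith
        finally have A: "2*\<phi> x - \<phi> (x+1) - \<phi> (x-1) + \<kappa>^4 * (real_of_int x)^2 * \<phi> x
            \<ge> \<kappa>^2 * w b0 * F y"
          by (simp add: w_def s_def algebra_simps power2_eq_square)
        have "\<kappa>^2 * w b0 * F y \<ge> \<kappa>^2 * r * F y"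
          using wr Fy m kp by (intro mult_right_mono mult_left_mono) (auto simp: b0_def)
        then show ?thesis using A ph by (simp add: algebra_simps)
      qed
      have lb: "Re \<mu> \<ge> r * \<kappa>^2" if "\<mu> \<in> dir_spectrum \<kappa> (I \<kappa>)" for \<mu>
      proof (rule maxprin[OF _ _ _ _ that, of \<phi>])
        show "finite (I \<kappa>)" using ab by simp
        show "\<forall>x\<in>I \<kappa>. 0 < \<phi> x" using inr Fm m by (force simp: \<phi>_def)
        show "\<forall>x\<in>I \<kappa>. 0 \<le> \<phi> (x + 1) \<and> 0 \<le> \<phi> (x - 1)" using inr Fm m by (force simp: \<phi>_def)
        show "\<forall>x\<in>I \<kappa>. r * \<kappa>^2 * \<phi> x \<le> 2 * \<phi> x - \<phi> (x + 1) - \<phi> (x - 1) + \<kappa> ^ 4 * (real_of_int x)\<^sup>2 * \<phi> x"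
          using sup by blast
      qed
      have ne: "Re ` dir_spectrum \<kappa> (I \<kappa>) \<noteq> {}" using spec_nonempty[OF ab(2)] ab(1) by simp
      have "Inf (Re ` dir_spectrum \<kappa> (I \<kappa>)) \<ge> r * \<kappa>^2"
        by (rule cInf_greatest[OF ne]) (use lb in auto)
      then show "Inf (Re ` dir_spectrum \<kappa> (I \<kappa>)) / \<kappa>^2 \<ge> r"
        using kp by (simp add: pos_le_divide_eq)
    qed
  qed
  show ?thesis
    unfolding le_Liminf_iff E_def[symmetric]
  proof (intro allI impI)
    fix y :: ereal assume "y < ereal E"
    then obtain r where r: "y < ereal r" "ereal r < ereal E" using ereal_dense2 by blast
    then have "r < E" by simp
    show "\<forall>\<^sub>F \<kappa> in at_right 0. y < ereal (Inf (Re ` dir_spectrum \<kappa> (I \<kappa>)) / \<kappa>^2)"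
      using key[OF \<open>r < E\<close>] by eventually_elim (use r(1) in \<open>auto intro: less_le_trans\<close>)
  qed
qed

lemma aa1: "aa n \<kappa> 1 = \<lfloor>hzero n 1 / \<kappa>\<rfloor> + 1"
  by (simp add: aa_def Let_def)
lemma beta1: "beta n \<kappa> 1 = (if hzero n 1 = 0 then 1 else hzero n 1 / (\<kappa> * real_of_int (aa n \<kappa> 1 - 1)))"
  by (simp add: aa_def beta_def Let_def)
lemmas aa1' = aa1[unfolded One_nat_def]
lemmas beta1' = beta1[unfolded One_nat_def]

lemma aaS: "aa n \<kappa> (Suc (Suc j)) = \<lfloor>hzero n (Suc (Suc j)) / (beta n \<kappa> (Suc j) * \<kappa>)\<rfloor> + 1"
  by (simp add: aa_def beta_def Let_def)
lemma betaS: "beta n \<kappa> (Suc (Suc j)) = hzero n (Suc (Suc j)) / (\<kappa> * real_of_int (aa n \<kappa> (Suc (Suc j)) - 1))"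
  by (simp add: aa_def beta_def Let_def)

lemma fl_lim:
  assumes c: "c > 0" and g: "(g \<longlongrightarrow> 1) (at_right 0)"
  shows "((\<lambda>\<kappa>. c / (\<kappa> * real_of_int \<lfloor>c / (g \<kappa> * \<kappa>)\<rfloor>)) \<longlongrightarrow> 1) (at_right (0::real))"
proof -
  define h where "h \<kappa> = \<kappa> * real_of_int \<lfloor>c / (g \<kappa> * \<kappa>)\<rfloor>" for \<kappa>
  have evg: "\<forall>\<^sub>F \<kappa> in at_right 0. g \<kappa> > 0" using order_tendstoD(1)[OF g, of 0] by simp
  have evk: "\<forall>\<^sub>F \<kappa> in at_right (0::real). \<kappa> > 0" by (rule eventually_at_right_less)
  have ev: "\<forall>\<^sub>F \<kappa> in at_right 0. c / g \<kappa> - \<kappa> \<le> h \<kappa> \<and> h \<kappa> \<le> c / g \<kappa>"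
    using evg evk
  proof eventually_elim
    case (elim \<kappa>)
    have fc: "real_of_int \<lfloor>c / (g \<kappa> * \<kappa>)\<rfloor> \<le> c / (g \<kappa> * \<kappa>)"
             "c / (g \<kappa> * \<kappa>) < real_of_int \<lfloor>c / (g \<kappa> * \<kappa>)\<rfloor> + 1"
      using floor_correct[of "c / (g \<kappa> * \<kappa>)"] by auto
    have e: "\<kappa> * (c / (g \<kappa> * \<kappa>)) = c / g \<kappa>" using elim by (simp add: field_simps)
    have "\<kappa> * real_of_int \<lfloor>c / (g \<kappa> * \<kappa>)\<rfloor> \<le> \<kappa> * (c / (g \<kappa> * \<kappa>))"
      using fc(1) elim by (intro mult_left_mono) auto
    moreover have "\<kappa> * (c / (g \<kappa> * \<kappa>)) \<le> \<kappa> * (real_of_int \<lfloor>c / (g \<kappa> * \<kappa>)\<rfloor> + 1)"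
      using fc(2) elim by (intro mult_left_mono) auto
    ultimately show ?case unfolding h_def e by (simp add: algebra_simps)
  qed
  have l1: "((\<lambda>\<kappa>. c / g \<kappa> - \<kappa>) \<longlongrightarrow> c / 1 - 0) (at_right 0)"
    by (intro tendsto_intros g) auto
  have l2: "((\<lambda>\<kappa>. c / g \<kappa>) \<longlongrightarrow> c / 1) (at_right 0)"
    by (intro tendsto_intros g) auto
  have "(h \<longlongrightarrow> c) (at_right 0)"
    by (rule tendsto_sandwich[OF _ _ l1[simplified] l2[simplified]]) (use ev in \<open>auto elim: eventually_mono\<close>)
  then have "((\<lambda>\<kappa>. c / h \<kappa>) \<longlongrightarrow> c / c) (at_right 0)"
    using c by (intro tendsto_intros) auto
  then show ?thesis using c by (simp add: h_def)
qed

lemma beta_lim: "1 \<le> j \<Longrightarrow> j \<le> hk n \<Longrightarrow> ((\<lambda>\<kappa>. beta n \<kappa> j) \<longlongrightarrow> 1) (at_right 0)"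
proof (induction j)
  case 0 then show ?case by simp
next
  case (Suc j)
  show ?case
  proof (cases j)
    case 0
    show ?thesis
    proof (cases "hzero n 1 = 0")
      case True
      then show ?thesis using 0 by (simp add: beta1 beta1')
    next
      case False
      then have zp: "hzero n 1 > 0" using Z1'[of 1 n] Suc.prems 0 by auto
      have "((\<lambda>\<kappa>. hzero n 1 / (\<kappa> * real_of_int \<lfloor>hzero n 1 / ((\<lambda>_. 1) \<kappa> * \<kappa>)\<rfloor>)) \<longlongrightarrow> 1) (at_right 0)"
        by (rule fl_lim[OF zp tendsto_const])
      moreover have "(\<lambda>\<kappa>. beta n \<kappa> (Suc j)) = (\<lambda>\<kappa>. hzero n 1 / (\<kappa> * real_of_int \<lfloor>hzero n 1 / ((\<lambda>_. 1) \<kappa> * \<kappa>)\<rfloor>))"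
        using False 0 by (intro ext) (simp add: beta1 aa1 beta1' aa1')
      ultimately show ?thesis by simp
    qed
  next
    case (Suc j')
    have zp: "hzero n (Suc (Suc j')) > 0" using Z5[of "Suc (Suc j')" n] Suc.prems \<open>j = Suc j'\<close> by simp
    have IH: "((\<lambda>\<kappa>. beta n \<kappa> (Suc j')) \<longlongrightarrow> 1) (at_right 0)" using Suc.IH Suc.prems \<open>j = Suc j'\<close> by simp
    have "((\<lambda>\<kappa>. hzero n (Suc (Suc j')) / (\<kappa> * real_of_int \<lfloor>hzero n (Suc (Suc j')) / (beta n \<kappa> (Suc j') * \<kappa>)\<rfloor>)) \<longlongrightarrow> 1) (at_right 0)"
      by (rule fl_lim[OF zp IH])
    moreover have "(\<lambda>\<kappa>. beta n \<kappa> (Suc j)) = (\<lambda>\<kappa>. hzero n (Suc (Suc j')) / (\<kappa> * real_of_int \<lfloor>hzero n (Suc (Suc j')) / (beta n \<kappa> (Suc j') * \<kappa>)\<rfloor>))"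
      using \<open>j = Suc j'\<close> by (intro ext) (simp add: betaS aaS)
    ultimately show ?thesis by simp
  qed
qed

lemma exact_aux: "b = z / (\<kappa> * real_of_int t) \<Longrightarrow> b > 0 \<Longrightarrow> \<kappa> > 0 \<Longrightarrow> b * \<kappa> * real_of_int t = z"
  by (cases "t = 0") (auto simp: field_simps)

lemma beta_exact:
  assumes "1 \<le> j" "\<kappa> > 0" "beta n \<kappa> j > 0"
  shows "beta n \<kappa> j * \<kappa> * real_of_int (aa n \<kappa> j - 1) = hzero n j"
proof (cases j)
  case 0 then show ?thesis using assms by simp
next
  case (Suc j')
  show ?thesis
  proof (cases j')
    case 0
    show ?thesis
    proof (cases "hzero n 1 = 0")
      case True then show ?thesis using Suc 0 by (simp add: aa1 aa1')
    next
      case False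
      then show ?thesis using Suc 0 assms by (intro exact_aux) (auto simp: beta1 beta1')
    qed
  next
    case (Suc j'')
    then show ?thesis using \<open>j = Suc j'\<close> assms by (intro exact_aux) (auto simp: betaS)
  qed
qed

lemma main_nonneg:
  fixes n j0 :: nat
  assumes n: "n \<ge> 1" and jk: "int j0 \<le> int (hk n) - 1"
    and ne: "\<forall>\<^sub>F \<kappa> in at_right 0. Iset n \<kappa> (int j0) \<noteq> {}"
  shows "Liminf (at_right (0::real)) (\<lambda>\<kappa>. ereal (Enj n (int j0) \<kappa> / \<kappa>^2)) \<ge> ereal (2 * real n + 1)"
proof -
  have evk: "\<forall>\<^sub>F \<kappa> in at_right (0::real). \<kappa> > 0" by (rule eventually_at_right_less)
  have hk1: "1 \<le> hk n" using n by (simp add: hk_eq)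
  show ?thesis
  proof (cases "j0 = 0")
    case True
    show ?thesis
    proof (cases "even n")
      case False
      then have "\<forall>\<^sub>F \<kappa> in at_right (0::real). False" using ne True by (simp add: Iset_def)
      then show ?thesis by simp
    next
      case ev: True
      have ne0: "\<forall>\<^sub>F \<kappa> in at_right (0::real). Iset n \<kappa> 0 \<noteq> {}" using ne True by simp
      define z1 where "z1 = hzero n 1"
      have z1: "0 \<le> z1" using Z1'[of 1 n] hk1 by (simp add: z1_def)
      have z1p: "z1 > 0"
      proof (rule ccontr)
        assume "\<not> z1 > 0"
        then have "z1 = 0" using z1 by simp
        then have "Iset n \<kappa> 0 = {}" for \<kappa> using ev by (simp add: Iset_def aa1 aa1' z1_def)
        then have "\<forall>\<^sub>F \<kappa> in at_right (0::real). False" using ne True by simp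
        then show False by simp
      qed
      have nz: "G n y \<noteq> 0" if "-z1 < y" "y < z1" for y
      proof (cases "0 \<le> y")
        case True then show ?thesis using Z4[OF hk1] that by (simp add: z1_def)
      next
        case False
        have "G n (-y) \<noteq> 0" using Z4[OF hk1, of "-y"] that False by (simp add: z1_def)
        moreover have "G n y = (-1)^n * G n (-y)" using G_parity[of n "-y"] by simp
        ultimately show ?thesis by simp
      qed
      obtain \<sigma> where sg: "\<forall>y. -z1 < y \<and> y < z1 \<longrightarrow> \<sigma> * G n y > 0"
        using nodal_sign[of "-z1" z1 n] z1p nz by auto
      have evI: "\<forall>\<^sub>F \<kappa> in at_right 0. \<exists>a b. Iset n \<kappa> 0 = {a..b} \<and> a \<le> b \<and>
        (\<forall>x\<in>Iset n \<kappa> 0. -z1 \<le> (\<lambda>_. 1) \<kappa> * \<kappa> * real_of_int (x-1) \<and> (\<lambda>_. 1) \<kappa> * \<kappa> * real_of_int (x+1) \<le> z1)"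
        using ne0 evk
      proof eventually_elim
        case (elim \<kappa>)
        define A where "A = \<lfloor>z1 / \<kappa>\<rfloor>"
        have I: "Iset n \<kappa> 0 = {-(A - 1) .. A - 1}" using ev by (simp add: Iset_def aa1 aa1' A_def z1_def)
        have Ale: "\<kappa> * real_of_int A \<le> z1"
        proof -
          have "real_of_int A \<le> z1 / \<kappa>" by (simp add: A_def)
          then show ?thesis using elim(2) by (simp add: field_simps)
        qed
        have "\<forall>x\<in>Iset n \<kappa> 0. -z1 \<le> \<kappa> * real_of_int (x-1) \<and> \<kappa> * real_of_int (x+1) \<le> z1"
        proof
          fix x assume "x \<in> Iset n \<kappa> 0"
          then have x: "-(A-1) \<le> x" "x \<le> A - 1" using I by auto
          have "\<kappa> * real_of_int (x+1) \<le> \<kappa> * real_of_int A" using x elim(2) by (intro mult_left_mono) auto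
          moreover have "\<kappa> * real_of_int (-A) \<le> \<kappa> * real_of_int (x-1)" using x elim(2) by (intro mult_left_mono) auto
          ultimately show "-z1 \<le> \<kappa> * real_of_int (x-1) \<and> \<kappa> * real_of_int (x+1) \<le> z1" using Ale by simp
        qed
        then show ?case using I elim(1) by auto
      qed
      have "Liminf (at_right (0::real)) (\<lambda>\<kappa>. ereal (Inf (Re ` dir_spectrum \<kappa> (Iset n \<kappa> 0)) / \<kappa>^2)) \<ge> ereal (2 * real n + 1)"
        by (rule final_generic[OF _ sg tendsto_const evI]) (use z1p in simp)
      then show ?thesis using True by (simp add: Enj_def)
    qed
  next
    case False
    then have j1: "1 \<le> j0" by simp
    have jk': "Suc j0 \<le> hk n" using jk by simp
    define \<alpha> where "\<alpha> = hzero n j0"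
    define \<gamma> where "\<gamma> = hzero n (Suc j0)"
    have ag: "\<alpha> < \<gamma>" using Z2[OF j1] jk' by (simp add: \<alpha>_def \<gamma>_def)
    have nz: "G n y \<noteq> 0" if "\<alpha> < y" "y < \<gamma>" for y
      using Z3[OF j1 _ , of n y] jk' that by (simp add: \<alpha>_def \<gamma>_def)
    obtain \<sigma> where sg: "\<forall>y. \<alpha> < y \<and> y < \<gamma> \<longrightarrow> \<sigma> * G n y > 0"
      using nodal_sign[of \<alpha> \<gamma> n] ag nz by auto
    have bl: "((\<lambda>\<kappa>. beta n \<kappa> j0) \<longlongrightarrow> 1) (at_right 0)" using beta_lim[OF j1] jk' by simp
    have evb: "\<forall>\<^sub>F \<kappa> in at_right 0. beta n \<kappa> j0 > 0" using order_tendstoD(1)[OF bl, of 0] by simp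
    have evI: "\<forall>\<^sub>F \<kappa> in at_right 0. \<exists>a b. Iset n \<kappa> (int j0) = {a..b} \<and> a \<le> b \<and>
        (\<forall>x\<in>Iset n \<kappa> (int j0). \<alpha> \<le> beta n \<kappa> j0 * \<kappa> * real_of_int (x-1) \<and> beta n \<kappa> j0 * \<kappa> * real_of_int (x+1) \<le> \<gamma>)"
      using ne evk evb
    proof eventually_elim
      case (elim \<kappa>)
      define s where "s = beta n \<kappa> j0 * \<kappa>"
      have sp: "s > 0" using elim by (simp add: s_def)
      have I: "Iset n \<kappa> (int j0) = {aa n \<kappa> j0 .. bb n \<kappa> j0}" using False by (simp add: Iset_def)
      have ex: "s * real_of_int (aa n \<kappa> j0 - 1) = \<alpha>"
        using beta_exact[OF j1 elim(2) elim(3)] by (simp add: s_def \<alpha>_def)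
      have bb: "bb n \<kappa> j0 = \<lfloor>\<gamma> / s\<rfloor> - 1" by (simp add: bb_def \<gamma>_def s_def)
      have Ble: "s * real_of_int \<lfloor>\<gamma> / s\<rfloor> \<le> \<gamma>"
      proof -
        have "s * real_of_int \<lfloor>\<gamma> / s\<rfloor> \<le> s * (\<gamma> / s)" using sp by (intro mult_left_mono) auto
        then show ?thesis using sp by simp
      qed
      have "\<forall>x\<in>Iset n \<kappa> (int j0). \<alpha> \<le> s * real_of_int (x-1) \<and> s * real_of_int (x+1) \<le> \<gamma>"
      proof
        fix x assume "x \<in> Iset n \<kappa> (int j0)"
        then have x: "aa n \<kappa> j0 \<le> x" "x \<le> \<lfloor>\<gamma> / s\<rfloor> - 1" using I bb by auto
        have "s * real_of_int (aa n \<kappa> j0 - 1) \<le> s * real_of_int (x-1)" using x sp by (intro mult_left_mono) auto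
        moreover have "s * real_of_int (x+1) \<le> s * real_of_int \<lfloor>\<gamma> / s\<rfloor>" using x sp by (intro mult_left_mono) auto
        ultimately show "\<alpha> \<le> s * real_of_int (x-1) \<and> s * real_of_int (x+1) \<le> \<gamma>" using ex Ble by linarith
      qed
      then show ?case using I elim(1) by (auto simp: s_def)
    qed
    have "Liminf (at_right (0::real)) (\<lambda>\<kappa>. ereal (Inf (Re ` dir_spectrum \<kappa> (Iset n \<kappa> (int j0))) / \<kappa>^2)) \<ge> ereal (2 * real n + 1)"
      by (rule final_generic[OF ag sg bl evI])
    then show ?thesis by (simp add: Enj_def)
  qed
qed

theorem lemma2p9:
  fixes n :: nat and j :: int
  assumes "n \<ge> 1"
    and "\<bar>j\<bar> \<le> int (hk n) - 1"
    and "\<forall>\<^sub>F \<kappa> in at_right 0. Iset n \<kappa> j \<noteq> {}"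
  shows "Liminf (at_right (0::real)) (\<lambda>\<kappa>. ereal (Enj n j \<kappa> / \<kappa>^2)) \<ge> ereal (2 * real n + 1)"
proof -
  define j0 where "j0 = nat \<bar>j\<bar>"
  have refl: "Iset n \<kappa> j = (if j \<ge> 0 then Iset n \<kappa> (int j0) else uminus ` Iset n \<kappa> (int j0))" for \<kappa>
    by (auto simp: Iset_def j0_def)
  have E: "Enj n j \<kappa> = Enj n (int j0) \<kappa>" for \<kappa>
    using refl[of \<kappa>] by (simp add: Enj_def dir_spectrum_refl split: if_splits)
  have ne: "\<forall>\<^sub>F \<kappa> in at_right 0. Iset n \<kappa> (int j0) \<noteq> {}"
    using assms(3) by eventually_elim (use refl in \<open>auto split: if_splits\<close>)
  have jk: "int j0 \<le> int (hk n) - 1" using assms(2) by (simp add: j0_def)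
  show ?thesis unfolding E by (rule main_nonneg[OF assms(1) jk ne])
qed

end
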